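(* Let $d\geq 1$ and let $n,m$ be integers with $\binom{d}{2}\leq m\leq dn-\binom{d+1}{2}$ and such that $m\bmod d=0$ if $d$ is odd and $m\bmod d=\frac{d}{2}$ if $d$ is even. Then there exists a $d$-degenerate graph $G$ with $n$ vertices and $m$ edges such that $$c(G)= n+\frac{(2^d-1)m}{d}-\frac{(d-3)2^d+d+1}{2}.$$
   Context: All graphs are finite, simple and undirected. A graph $G$ is $d$-degenerate if every subgraph of $G$ has a vertex of degree at most $d$. A clique of a graph $G$ is a (possibly empty) set of pairwise adjacent vertices; $c(G)$ denotes the number of cliques of $G$ (including the empty clique, all single vertices and all edges). *)

theory Defs
  imports Complex_Main
begin

definition simple_graph :: "'a set \<Rightarrow> 'a set set \<Rightarrow> bool" where
  "simple_graph V E \<longleftrightarrow> finite V \<and>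
     (\<forall>e\<in>E. \<exists>u v. e = {u, v} \<and> u \<noteq> v \<and> u \<in> V \<and> v \<in> V)"

definition degree :: "'a set set \<Rightarrow> 'a \<Rightarrow> nat" where
  "degree E v = card {e\<in>E. v \<in> e}"

definition subgraph :: "'a set \<Rightarrow> 'a set set \<Rightarrow> 'a set \<Rightarrow> 'a set set \<Rightarrow> bool" where
  "subgraph V' E' V E \<longleftrightarrow> V' \<subseteq> V \<and> E' \<subseteq> E \<and> (\<forall>e\<in>E'. e \<subseteq> V')"

definition degenerate :: "nat \<Rightarrow> 'a set \<Rightarrow> 'a set set \<Rightarrow> bool" where
  "degenerate d V E \<longleftrightarrow>
     (\<forall>V' E'. subgraph V' E' V E \<and> V' \<noteq> {} \<longrightarrow> (\<exists>v\<in>V'. degree E' v \<le> d))"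

definition is_clique :: "'a set \<Rightarrow> 'a set set \<Rightarrow> 'a set \<Rightarrow> bool" where
  "is_clique V E S \<longleftrightarrow> S \<subseteq> V \<and> (\<forall>u\<in>S. \<forall>v\<in>S. u \<noteq> v \<longrightarrow> {u, v} \<in> E)"

text \<open>Number of cliques, including the empty clique.\<close>
definition num_cliques :: "'a set \<Rightarrow> 'a set set \<Rightarrow> nat" where
  "num_cliques V E = card {S. is_clique V E S}"

end

theory Submission imports Defs begin

lemma constr:
  fixes d k n :: nat
  assumes "d + k \<le> n"
  defines "B \<equiv> {..<d}" and "N \<equiv> {d..<d+k}" and "I \<equiv> {d+k..<n}"
  defines "E \<equiv> {A. A \<subseteq> B \<and> card A = 2} \<union> (\<lambda>(u,v). {u,v}) ` (B \<times> N)"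
  shows "simple_graph {..<n} E" "degenerate d {..<n} E" "card E = (d choose 2) + d * k"
    "num_cliques {..<n} E = 2^d + k * 2^d + (n - d - k)"
proof -
  have fB: "finite B" and fN: "finite N" and cB: "card B = d" and cN: "card N = k"
    by (auto simp: B_def N_def)
  have BN: "B \<inter> N = {}" by (auto simp: B_def N_def)
  show "simple_graph {..<n} E"
    unfolding simple_graph_def E_def using assms(1)
    apply (auto simp: card_2_iff B_def N_def)
    subgoal for x y by (rule exI[of _ x], rule exI[of _ y]) auto
    subgoal for x y by (rule exI[of _ x], rule exI[of _ y]) auto
    done
  have e1: "card {A. A \<subseteq> B \<and> card A = 2} = d choose 2"
    using n_subsets[OF fB, of 2] cB by simp
  have inj1: "inj_on (\<lambda>(u,v). {u,v}) (B \<times> N)"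
    using BN by (auto simp: inj_on_def doubleton_eq_iff)
  have e2: "card ((\<lambda>(u,v). {u,v}) ` (B \<times> N)) = d * k"
    using card_image[OF inj1] cB cN by (simp add: card_cartesian_product)
  have disj: "{A. A \<subseteq> B \<and> card A = 2} \<inter> (\<lambda>(u,v). {u,v}) ` (B \<times> N) = {}"
    using BN by auto
  show "card E = (d choose 2) + d * k"
    unfolding E_def
    by (subst card_Un_disjoint) (use fB fN disj e1 e2 in auto)
  have adj: "{u,v} \<in> E \<longleftrightarrow> u \<noteq> v \<and> ((u \<in> B \<and> v \<in> B) \<or> (u \<in> B \<and> v \<in> N) \<or> (v \<in> B \<and> u \<in> N))" for u v
  proof
    assume "{u,v} \<in> E"
    then show "u \<noteq> v \<and> ((u \<in> B \<and> v \<in> B) \<or> (u \<in> B \<and> v \<in> N) \<or> (v \<in> B \<and> u \<in> N))"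
      unfolding E_def using BN by (auto simp: doubleton_eq_iff card_2_iff split: if_splits)
  next
    assume "u \<noteq> v \<and> ((u \<in> B \<and> v \<in> B) \<or> (u \<in> B \<and> v \<in> N) \<or> (v \<in> B \<and> u \<in> N))"
    then show "{u,v} \<in> E"
    proof (elim conjE disjE)
      assume "u \<noteq> v" "u \<in> B" "v \<in> B" then show ?thesis by (auto simp: E_def)
    next
      assume "u \<in> B" "v \<in> N" then show ?thesis unfolding E_def by force
    next
      assume "v \<in> B" "u \<in> N" then have "{u,v} = (\<lambda>(u,v). {u,v}) (v,u)" by auto
      then show ?thesis unfolding E_def using \<open>v \<in> B\<close> \<open>u \<in> N\<close> by blast
    qed
  qed
  have Eform: "\<exists>a b. e = {a,b} \<and> a \<noteq> b \<and> a \<in> B \<and> (b \<in> B \<or> b \<in> N)" if "e \<in> E" for e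
    using that BN unfolding E_def
    apply (auto simp: card_2_iff)
    subgoal for a b by (rule exI[of _ a], rule exI[of _ b]) auto
    done
  have BV: "B \<subseteq> {..<n}" "N \<subseteq> {..<n}" "I \<subseteq> {..<n}" using assms(1) by (auto simp: B_def N_def I_def)
  show "degenerate d {..<n} E"
    unfolding degenerate_def
  proof (intro allI impI)
    fix V' E' assume a: "subgraph V' E' {..<n} E \<and> V' \<noteq> {}"
    hence sub: "E' \<subseteq> E" "\<forall>e\<in>E'. e \<subseteq> V'" "V' \<noteq> {}" by (auto simp: subgraph_def)
    show "\<exists>v\<in>V'. degree E' v \<le> d"
    proof (cases "\<exists>v\<in>V'. v \<notin> B")
      case True
      then obtain v where v: "v \<in> V'" "v \<notin> B" by blast
      have "{e\<in>E'. v \<in> e} \<subseteq> (\<lambda>u. {u,v}) ` B"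
      proof
        fix e assume "e \<in> {e\<in>E'. v \<in> e}"
        hence "e \<in> E" "v \<in> e" using sub by auto
        then obtain a b where "e = {a,b}" "a \<in> B" using Eform by blast
        with \<open>v \<in> e\<close> v show "e \<in> (\<lambda>u. {u,v}) ` B" by auto
      qed
      hence "degree E' v \<le> card ((\<lambda>u. {u,v}) ` B)" unfolding degree_def
        by (intro card_mono) (use fB in auto)
      also have "\<dots> \<le> d" using card_image_le[OF fB, of "\<lambda>u. {u,v}"] cB by simp
      finally show ?thesis using v by blast
    next
      case False
      then obtain v where v: "v \<in> V'" using sub by blast
      have "{e\<in>E'. v \<in> e} \<subseteq> (\<lambda>u. {u,v}) ` (B - {v})"
      proof
        fix e assume "e \<in> {e\<in>E'. v \<in> e}"
        hence "e \<in> E" "v \<in> e" "e \<subseteq> V'" using sub by auto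
        then obtain a b where "e = {a,b}" "a \<noteq> b" using Eform by blast
        with \<open>v \<in> e\<close> \<open>e \<subseteq> V'\<close> False show "e \<in> (\<lambda>u. {u,v}) ` (B - {v})" by auto
      qed
      hence "degree E' v \<le> card ((\<lambda>u. {u,v}) ` (B - {v}))" unfolding degree_def
        by (intro card_mono) (use fB in auto)
      also have "\<dots> \<le> card (B - {v})" using fB by (intro card_image_le) auto
      also have "\<dots> \<le> d" using cB fB by (metis card_Diff1_le)
      finally show ?thesis using v by blast
    qed
  qed
  have cl: "{S. is_clique {..<n} E S} = Pow B \<union> (\<lambda>(v,T). insert v T) ` (N \<times> Pow B) \<union> (\<lambda>v. {v}) ` I"
  proof (intro equalityI subsetI)
    fix S assume "S \<in> {S. is_clique {..<n} E S}"
    hence Sc: "S \<subseteq> {..<n}" "\<And>u v. u \<in> S \<Longrightarrow> v \<in> S \<Longrightarrow> u \<noteq> v \<Longrightarrow> {u,v} \<in> E"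
      by (auto simp: is_clique_def)
    show "S \<in> Pow B \<union> (\<lambda>(v,T). insert v T) ` (N \<times> Pow B) \<union> (\<lambda>v. {v}) ` I"
    proof (cases "S \<subseteq> B")
      case True then show ?thesis by blast
    next
      case False
      then obtain v where v: "v \<in> S" "v \<notin> B" by blast
      have vn: "v < n" using v Sc by auto
      show ?thesis
      proof (cases "v \<in> N")
        case True
        have "S - {v} \<subseteq> B"
        proof
          fix w assume "w \<in> S - {v}"
          then have "{v,w} \<in> E" using Sc v by auto
          then show "w \<in> B" using adj[of v w] v by auto
        qed
        moreover have "S = insert v (S - {v})" using v by auto
        ultimately have "S = (\<lambda>(v,T). insert v T) (v, S - {v})" "(v, S - {v}) \<in> N \<times> Pow B"
          using True by auto
        then show ?thesis by blast
      next
        case False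
        have "v \<in> I" using vn v False by (auto simp: B_def N_def I_def)
        have "S = {v}"
        proof (rule ccontr)
          assume "S \<noteq> {v}"
          then obtain w where "w \<in> S" "w \<noteq> v" using v by blast
          then have "{v,w} \<in> E" using Sc v by auto
          then show False using adj[of v w] v False \<open>w \<noteq> v\<close> by auto
        qed
        then show ?thesis using \<open>v \<in> I\<close> by blast
      qed
    qed
  next
    fix S assume S: "S \<in> Pow B \<union> (\<lambda>(v,T). insert v T) ` (N \<times> Pow B) \<union> (\<lambda>v. {v}) ` I"
    show "S \<in> {S. is_clique {..<n} E S}"
      using S BV BN unfolding is_clique_def by (auto simp: adj)
  qed
  have inj2: "inj_on (\<lambda>(v,T). insert v T) (N \<times> Pow B)"
  proof (rule inj_onI)
    fix x y assume "x \<in> N \<times> Pow B" "y \<in> N \<times> Pow B" "(\<lambda>(v,T). insert v T) x = (\<lambda>(v,T). insert v T) y"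
    then obtain v T v' T' where xy: "x = (v,T)" "y = (v',T')" "v \<in> N" "v' \<in> N" "T \<subseteq> B" "T' \<subseteq> B"
      "insert v T = insert v' T'" by auto
    have "v \<notin> B" "v' \<notin> B" using xy BN by auto
    hence "v = v'" using xy by blast
    moreover have "T = insert v T - {v}" "T' = insert v' T' - {v'}" using xy \<open>v \<notin> B\<close> \<open>v' \<notin> B\<close> by auto
    ultimately show "x = y" using xy by (metis insert_Diff_single)
  qed
  have c2: "card ((\<lambda>(v,T). insert v T) ` (N \<times> Pow B)) = k * 2^d"
    using card_image[OF inj2] cN cB fB fN by (simp add: card_cartesian_product card_Pow)
  have c3: "card ((\<lambda>v. {v}) ` I) = n - d - k"
    by (subst card_image) (auto simp: I_def)
  have c1: "card (Pow B) = 2^d" using fB cB by (simp add: card_Pow)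
  have d1: "Pow B \<inter> (\<lambda>(v,T). insert v T) ` (N \<times> Pow B) = {}" using BN by auto
  have d2: "(Pow B \<union> (\<lambda>(v,T). insert v T) ` (N \<times> Pow B)) \<inter> (\<lambda>v. {v}) ` I = {}"
    by (auto simp: B_def N_def I_def)
  have fI: "finite I" by (simp add: I_def)
  show "num_cliques {..<n} E = 2^d + k * 2^d + (n - d - k)"
    unfolding num_cliques_def cl
    using fB fN fI d1 d2 c1 c2 c3
    by (simp add: card_Un_disjoint)
qed

lemma choose2_mult: "2 * (d choose 2) = d * (d - 1)"
proof -
  have "even (d * (d - 1))" by (cases "even d") auto
  then show ?thesis by (simp add: choose_two)
qed

theorem proposition4:
  fixes d n m :: nat
  assumes "d \<ge> 1"
    and "d choose 2 \<le> m"
    and "int m \<le> int d * int n - int ((d + 1) choose 2)"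
    and "odd d \<longrightarrow> m mod d = 0"
    and "even d \<longrightarrow> m mod d = d div 2"
  shows "\<exists>(V :: nat set) (E :: nat set set).
           simple_graph V E \<and> degenerate d V E \<and> card V = n \<and> card E = m \<and>
           real (num_cliques V E) =
             real n + (2 ^ d - 1) * real m / real d
               - ((real d - 3) * 2 ^ d + real d + 1) / 2"
proof -
  define C where "C = d choose 2"
  have C2: "2 * C = d * (d - 1)" unfolding C_def by (rule choose2_mult)
  have Cmod: "C mod d = m mod d"
  proof (cases "even d")
    case True
    then obtain j where j: "d = 2 * j" by blast
    with assms(1) have "j \<ge> 1" by simp
    have "2 * C = 2 * (d * (j - 1) + j)" using C2 j \<open>j \<ge> 1\<close>
      by (cases j) (auto simp: algebra_simps)
    hence "C = d * (j - 1) + j" by simp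
    hence "C mod d = j mod d" by simp
    also have "\<dots> = j" using j \<open>j \<ge> 1\<close> by simp
    finally show ?thesis using assms(5) True j by simp
  next
    case False
    then obtain j where j: "d = 2 * j + 1" using oddE by blast
    have "2 * C = 2 * (d * j)" using C2 j by (simp add: algebra_simps)
    hence "C = d * j" by simp
    then show ?thesis using assms(4) False by simp
  qed
  have "d dvd m - C" using Cmod assms(2) unfolding C_def
    using mod_eq_dvd_iff_nat[of "d choose 2" m d] by simp
  then obtain k where k: "m - C = d * k" by blast
  have mk: "m = C + d * k" using k assms(2) unfolding C_def by simp
  have C1: "(d + 1) choose 2 = C + d" unfolding C_def
    by (simp add: choose_two) (cases d, auto simp: algebra_simps)
  have "int (d * k) + int (2 * C) + int d \<le> int (d * n)"
    using assms(3) mk C1 by simp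
  hence "d * k + d * (d - 1) + d \<le> d * n" using C2 by linarith
  hence "d * (k + d) \<le> d * n" using assms(1) by (cases d) (auto simp: algebra_simps)
  hence kn: "d + k \<le> n" using assms(1) by simp
  note cs = constr[OF kn]
  show ?thesis
  proof (intro exI conjI)
    show "simple_graph {..<n} ({A. A \<subseteq> {..<d} \<and> card A = 2} \<union> (\<lambda>(u,v). {u,v}) ` ({..<d} \<times> {d..<d+k}))"
      using cs(1) by simp
    show "degenerate d {..<n} ({A. A \<subseteq> {..<d} \<and> card A = 2} \<union> (\<lambda>(u,v). {u,v}) ` ({..<d} \<times> {d..<d+k}))"
      using cs(2) by simp
    show "card {..<n} = n" by simp
    show "card ({A. A \<subseteq> {..<d} \<and> card A = 2} \<union> (\<lambda>(u,v). {u,v}) ` ({..<d} \<times> {d..<d+k})) = m"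
      using cs(3) mk C_def by simp
    have rC: "real C = real d * (real d - 1) / 2"
      using arg_cong[OF C2, of real] assms(1) by (simp add: of_nat_diff)
    have rm: "real m = real C + real d * real k" using mk by simp
    have rn: "real (n - d - k) = real n - real d - real k" using kn by (simp add: of_nat_diff)
    show "real (num_cliques {..<n} ({A. A \<subseteq> {..<d} \<and> card A = 2} \<union> (\<lambda>(u,v). {u,v}) ` ({..<d} \<times> {d..<d+k}))) =
             real n + (2 ^ d - 1) * real m / real d
               - ((real d - 3) * 2 ^ d + real d + 1) / 2"
      unfolding cs(4) using assms(1) rn
      by (simp add: rm rC field_simps)
  qed
qed

end
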